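(* Consider instances with indivisible items. There is no (possibly randomized) mechanism $M$ that is individually rational, truthful in expectation and budget feasible in expectation, together with constants $\alpha>1-1/e$ and $\theta_0>0$, such that on every instance with $c_{\max}/B\le\theta_0$ the expected utility of $M$ is at least $\alpha U^\star$. That is, no such mechanism achieves a (large-market) approximation ratio better than $1-1/e$.
   Context: A buyer with budget $B>0$ faces a finite set $S$ of sellers; seller $i$ owns one indivisible item giving the buyer utility $u_i>0$ and has a private cost $c_i\ge0$; $c_{\max}=\max_i c_i$. $U^\star=\max\{\sum_{i\in T}u_i: T\subseteq S,\ \sum_{i\in T}c_i\le B\}$. A randomized mechanism maps the reported cost vector to a random set of winners $W\subseteq S$ and random payments $p_i\ge0$. It is truthful in expectation if for every seller $i$, every true cost $c_i$, every report $\bar c_i$ and every reports $c_{-i}$ of the others, $\mathbb E[p_i-c_i\mathbf 1[i\in W]]$ under report $(\bar c_i,c_{-i})$ is at most its value under $(c_i,c_{-i})$; individually rational in expectation if $\mathbb E[p_i]\ge c_i\Pr[i\in W]$ under truthful reports; budget feasible in expectation if $\mathbb E[\sum_i p_i]\le B$. Its utility is $\sum_{i\in W}u_i$. *)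

theory Defs
  imports "HOL-Probability.Probability"
begin

text \<open>An outcome is a winner set together with a payment
vector. A randomized mechanism maps (B, S, u, reported costs) to a distribution of outcomes.\<close>

type_synonym outcome = "nat set \<times> (nat \<Rightarrow> real)"
type_synonym mechanism = "real \<Rightarrow> nat set \<Rightarrow> (nat \<Rightarrow> real) \<Rightarrow> (nat \<Rightarrow> real) \<Rightarrow> outcome pmf"

definition valid_instance :: "real \<Rightarrow> nat set \<Rightarrow> (nat \<Rightarrow> real) \<Rightarrow> (nat \<Rightarrow> real) \<Rightarrow> bool" where
  "valid_instance B S u c \<longleftrightarrow> B > 0 \<and> finite S \<and> (\<forall>i\<in>S. u i > 0) \<and> (\<forall>i\<in>S. c i \<ge> 0)"

text \<open>Expected payment to seller i (payments are nonnegative, so the nonnegative integral is used).\<close>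
definition exp_pay :: "outcome pmf \<Rightarrow> nat \<Rightarrow> ennreal" where
  "exp_pay D i = (\<integral>\<^sup>+ \<omega>. ennreal (snd \<omega> i) \<partial>measure_pmf D)"

definition win_prob :: "outcome pmf \<Rightarrow> nat \<Rightarrow> ennreal" where
  "win_prob D i = emeasure (measure_pmf D) {\<omega>. i \<in> fst \<omega>}"

definition exp_total_pay :: "outcome pmf \<Rightarrow> nat set \<Rightarrow> ennreal" where
  "exp_total_pay D S = (\<integral>\<^sup>+ \<omega>. ennreal (\<Sum>i\<in>S. snd \<omega> i) \<partial>measure_pmf D)"

definition exp_utility :: "outcome pmf \<Rightarrow> (nat \<Rightarrow> real) \<Rightarrow> ennreal" where
  "exp_utility D u = (\<integral>\<^sup>+ \<omega>. ennreal (\<Sum>i\<in>fst \<omega>. u i) \<partial>measure_pmf D)"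

definition well_formed :: "mechanism \<Rightarrow> bool" where
  "well_formed M \<longleftrightarrow> (\<forall>B S u c. valid_instance B S u c \<longrightarrow>
      (\<forall>\<omega>\<in>set_pmf (M B S u c). fst \<omega> \<subseteq> S \<and> (\<forall>i. snd \<omega> i \<ge> 0)))"

definition individually_rational :: "mechanism \<Rightarrow> bool" where
  "individually_rational M \<longleftrightarrow> (\<forall>B S u c. valid_instance B S u c \<longrightarrow>
      (\<forall>i\<in>S. ennreal (c i) * win_prob (M B S u c) i \<le> exp_pay (M B S u c) i))"

text \<open>Truthful in expectation: E[p_i - c_i 1[i\<in>W]] under misreport cb is at most that under
truthful report c_i; rearranged to avoid subtraction (all quantities are finite by budget
feasibility).\<close>
definition truthful_in_expectation :: "mechanism \<Rightarrow> bool" where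
  "truthful_in_expectation M \<longleftrightarrow> (\<forall>B S u c i cb. valid_instance B S u c \<longrightarrow> i \<in> S \<longrightarrow> cb \<ge> 0 \<longrightarrow>
      exp_pay (M B S u (c(i := cb))) i + ennreal (c i) * win_prob (M B S u c) i
      \<le> exp_pay (M B S u c) i + ennreal (c i) * win_prob (M B S u (c(i := cb))) i)"

definition budget_feasible_in_expectation :: "mechanism \<Rightarrow> bool" where
  "budget_feasible_in_expectation M \<longleftrightarrow> (\<forall>B S u c. valid_instance B S u c \<longrightarrow>
      exp_total_pay (M B S u c) S \<le> ennreal B)"

definition opt_utility :: "real \<Rightarrow> nat set \<Rightarrow> (nat \<Rightarrow> real) \<Rightarrow> (nat \<Rightarrow> real) \<Rightarrow> real" where
  "opt_utility B S u c = Max {(\<Sum>i\<in>T. u i) | T. T \<subseteq> S \<and> (\<Sum>i\<in>T. c i) \<le> B}"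

definition c_max :: "nat set \<Rightarrow> (nat \<Rightarrow> real) \<Rightarrow> real" where
  "c_max S c = Max (c ` S)"

end

theory Submission
  imports Defs
begin

definition wt :: "(nat \<Rightarrow> real) \<Rightarrow> nat set \<Rightarrow> (nat \<Rightarrow> nat) \<Rightarrow> real" where
  "wt p S g = (\<Prod>i\<in>S. p (g i))"

lemma decomp:
  fixes \<Psi> :: "(nat \<Rightarrow> nat) \<Rightarrow> real"
  assumes "finite S" "i \<in> S"
  shows "(\<Sum>g\<in>PiE S (\<lambda>_. L). wt p S g * \<Psi> g) =
         (\<Sum>v\<in>L. p v * (\<Sum>g'\<in>PiE (S-{i}) (\<lambda>_. L). wt p (S-{i}) g' * \<Psi> (g'(i:=v))))"
proof -
  let ?S' = "S - {i}"
  have S: "S = insert i ?S'" using assms by auto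
  have "(\<Sum>g\<in>PiE S (\<lambda>_. L). wt p S g * \<Psi> g) =
        (\<Sum>g\<in>(\<lambda>(y, g). g(i := y)) ` (L \<times> PiE ?S' (\<lambda>_. L)). wt p S g * \<Psi> g)"
    by (subst S, subst PiE_insert_eq) simp
  also have "\<dots> = (\<Sum>x\<in>L \<times> PiE ?S' (\<lambda>_. L). wt p S ((\<lambda>(y, g). g(i := y)) x) * \<Psi> ((\<lambda>(y, g). g(i := y)) x))"
    by (subst sum.reindex) (use inj_combinator[of i ?S' "\<lambda>_. L"] in auto)
  also have "\<dots> = (\<Sum>v\<in>L. \<Sum>g'\<in>PiE ?S' (\<lambda>_. L). wt p S (g'(i:=v)) * \<Psi> (g'(i:=v)))"
    by (simp add: sum.cartesian_product split_def)
  also have "\<dots> = (\<Sum>v\<in>L. \<Sum>g'\<in>PiE ?S' (\<lambda>_. L). p v * (wt p ?S' g' * \<Psi> (g'(i:=v))))"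
  proof (intro sum.cong refl)
    fix v g' assume "g' \<in> PiE ?S' (\<lambda>_. L)"
    have "wt p S (g'(i:=v)) = p v * wt p ?S' (g'(i:=v))"
      unfolding wt_def using assms by (simp add: prod.remove)
    also have "wt p ?S' (g'(i:=v)) = wt p ?S' g'"
      unfolding wt_def by (intro prod.cong) auto
    finally have "wt p S (g'(i:=v)) = p v * wt p ?S' g'" .
    thus "wt p S (g'(i:=v)) * \<Psi> (g'(i:=v)) = p v * (wt p ?S' g' * \<Psi> (g'(i:=v)))" by simp
  qed
  also have "\<dots> = (\<Sum>v\<in>L. p v * (\<Sum>g'\<in>PiE ?S' (\<lambda>_. L). wt p ?S' g' * \<Psi> (g'(i:=v))))"
    by (simp add: sum_distrib_left)
  finally show ?thesis .
qed

lemma wt_total: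
  assumes "finite S" "finite L" "sum p L = 1"
  shows "(\<Sum>g\<in>PiE S (\<lambda>_. L). wt p S g) = 1"
proof -
  have "(\<Prod>x\<in>S. \<Sum>y\<in>L. p y) = (\<Sum>g\<in>PiE S (\<lambda>_. L). \<Prod>x\<in>S. p (g x))"
    by (rule prod_sum_PiE) (use assms in auto)
  thus ?thesis using assms by (simp add: wt_def)
qed

lemma wt_nonneg: "(\<And>v. p v \<ge> 0) \<Longrightarrow> wt p S g \<ge> 0"
  unfolding wt_def by (simp add: prod_nonneg)

lemma decomp2:
  fixes \<Psi> :: "(nat \<Rightarrow> nat) \<Rightarrow> real"
  assumes "finite S" "i \<in> S" "finite L"
  shows "(\<Sum>g\<in>PiE S (\<lambda>_. L). wt p S g * \<Psi> g) =
         (\<Sum>g'\<in>PiE (S-{i}) (\<lambda>_. L). wt p (S-{i}) g' * (\<Sum>v\<in>L. p v * \<Psi> (g'(i:=v))))"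
proof -
  have "(\<Sum>g\<in>PiE S (\<lambda>_. L). wt p S g * \<Psi> g) =
     (\<Sum>v\<in>L. \<Sum>g'\<in>PiE (S-{i}) (\<lambda>_. L). p v * (wt p (S-{i}) g' * \<Psi> (g'(i:=v))))"
    unfolding decomp[OF assms(1,2)] sum_distrib_left ..
  also have "\<dots> = (\<Sum>g'\<in>PiE (S-{i}) (\<lambda>_. L). \<Sum>v\<in>L. p v * (wt p (S-{i}) g' * \<Psi> (g'(i:=v))))"
    by (rule sum.swap)
  also have "\<dots> = (\<Sum>g'\<in>PiE (S-{i}) (\<lambda>_. L). wt p (S-{i}) g' * (\<Sum>v\<in>L. p v * \<Psi> (g'(i:=v))))"
    by (intro sum.cong refl) (simp add: sum_distrib_left mult_ac)
  finally show ?thesis .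
qed

lemma opt_ge:
  assumes "finite S" "T \<subseteq> S" "sum c T \<le> B"
  shows "sum u T \<le> opt_utility B S u c"
proof -
  have "{(\<Sum>i\<in>T. u i) | T. T \<subseteq> S \<and> (\<Sum>i\<in>T. c i) \<le> B} = (\<lambda>T. sum u T) ` {T. T \<subseteq> S \<and> sum c T \<le> B}"
    by auto
  moreover have "finite {T. T \<subseteq> S \<and> sum c T \<le> B}"
    using assms(1) by (rule finite_subset[rotated, OF finite_Pow_iff[THEN iffD2]]) auto
  ultimately have fin: "finite {(\<Sum>i\<in>T. u i) | T. T \<subseteq> S \<and> (\<Sum>i\<in>T. c i) \<le> B}" by simp
  have "sum u T \<in> {(\<Sum>i\<in>T. u i) | T. T \<subseteq> S \<and> (\<Sum>i\<in>T. c i) \<le> B}" using assms by blast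
  thus ?thesis unfolding opt_utility_def using fin by (rule Max_ge[rotated])
qed

definition xr :: "outcome pmf \<Rightarrow> nat \<Rightarrow> real" where
  "xr D i = measure_pmf.prob D {\<omega>. i \<in> fst \<omega>}"
definition pr :: "outcome pmf \<Rightarrow> nat \<Rightarrow> real" where
  "pr D i = enn2real (exp_pay D i)"

lemma win_prob_eq: "win_prob D i = ennreal (xr D i)"
  unfolding win_prob_def xr_def by (simp add: measure_pmf.emeasure_eq_measure)

lemma xr_bounds: "0 \<le> xr D i" "xr D i \<le> 1"
  unfolding xr_def by auto

lemma total_pay_sum:
  assumes "finite S" "\<And>\<omega> i. \<omega> \<in> set_pmf D \<Longrightarrow> snd \<omega> i \<ge> 0"
  shows "exp_total_pay D S = (\<Sum>i\<in>S. exp_pay D i)"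
proof -
  have "exp_total_pay D S = (\<integral>\<^sup>+ \<omega>. (\<Sum>i\<in>S. ennreal (snd \<omega> i)) \<partial>measure_pmf D)"
    unfolding exp_total_pay_def
    by (intro nn_integral_cong_AE) (auto simp: AE_measure_pmf_iff assms intro!: sum_ennreal[symmetric] sum_nonneg)
  also have "\<dots> = (\<Sum>i\<in>S. exp_pay D i)"
    unfolding exp_pay_def by (rule nn_integral_sum) auto
  finally show ?thesis .
qed

lemma pay_finite:
  assumes "finite S" "\<And>\<omega> i. \<omega> \<in> set_pmf D \<Longrightarrow> snd \<omega> i \<ge> 0"
    and "exp_total_pay D S \<le> ennreal B" "i \<in> S"
  shows "exp_pay D i = ennreal (pr D i)" "pr D i \<ge> 0"
proof -
  have "exp_pay D i \<le> (\<Sum>i\<in>S. exp_pay D i)"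
    using assms by (intro member_le_sum) auto
  also have "\<dots> \<le> ennreal B" using assms total_pay_sum by metis
  finally have "exp_pay D i < \<infinity>" by (simp add: le_less_trans)
  thus "exp_pay D i = ennreal (pr D i)" unfolding pr_def by (simp add: ennreal_enn2real_if)
  show "pr D i \<ge> 0" unfolding pr_def by simp
qed

lemma pay_sum_le:
  assumes "finite S" "\<And>\<omega> i. \<omega> \<in> set_pmf D \<Longrightarrow> snd \<omega> i \<ge> 0"
    and "exp_total_pay D S \<le> ennreal B" "B \<ge> 0"
  shows "(\<Sum>i\<in>S. pr D i) \<le> B"
proof -
  have "ennreal (\<Sum>i\<in>S. pr D i) = (\<Sum>i\<in>S. ennreal (pr D i))"
    using pay_finite(2)[OF assms(1-3)] by (intro sum_ennreal[symmetric]) auto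
  also have "\<dots> = (\<Sum>i\<in>S. exp_pay D i)"
    using pay_finite(1)[OF assms(1-3)] by simp
  also have "\<dots> \<le> ennreal B" using assms total_pay_sum by metis
  finally show ?thesis using assms(4) by (simp add: ennreal_le_iff)
qed

lemma utility_eq:
  assumes "finite S" "\<And>\<omega>. \<omega> \<in> set_pmf D \<Longrightarrow> fst \<omega> \<subseteq> S"
  shows "exp_utility D (\<lambda>_. 1) = ennreal (\<Sum>i\<in>S. xr D i)"
proof -
  have "exp_utility D (\<lambda>_. 1) = (\<integral>\<^sup>+ \<omega>. (\<Sum>i\<in>S. indicator {\<omega>. i \<in> fst \<omega>} \<omega>) \<partial>measure_pmf D)"
    unfolding exp_utility_def
  proof (intro nn_integral_cong_AE, unfold AE_measure_pmf_iff, intro ballI)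
    fix \<omega> assume "\<omega> \<in> set_pmf D"
    hence sub: "fst \<omega> \<subseteq> S" using assms by auto
    have "(\<Sum>i\<in>S. indicator {\<omega>. i \<in> fst \<omega>} \<omega> :: ennreal) = (\<Sum>i\<in>S. if i \<in> fst \<omega> then 1 else 0)"
      by (intro sum.cong) (auto simp: indicator_def)
    also have "\<dots> = of_nat (card (S \<inter> fst \<omega>))"
      using assms(1) by (simp add: sum.If_cases)
    also have "S \<inter> fst \<omega> = fst \<omega>" using sub by auto
    finally show "ennreal (\<Sum>i\<in>fst \<omega>. 1) = (\<Sum>i\<in>S. indicator {\<omega>. i \<in> fst \<omega>} \<omega>)" by (simp add: ennreal_of_nat_eq_real_of_nat)
  qed
  also have "\<dots> = (\<Sum>i\<in>S. emeasure (measure_pmf D) {\<omega>. i \<in> fst \<omega>})"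
    by (subst nn_integral_sum) auto
  also have "\<dots> = (\<Sum>i\<in>S. ennreal (xr D i))"
    unfolding xr_def by (simp add: measure_pmf.emeasure_eq_measure)
  also have "\<dots> = ennreal (\<Sum>i\<in>S. xr D i)"
    by (rule sum_ennreal) (simp add: xr_def)
  finally show ?thesis .
qed

lemma truth_real:
  assumes "0 \<le> a" "0 \<le> b" "0 \<le> c" "0 \<le> x" "0 \<le> y"
    and "ennreal a + ennreal c * ennreal x \<le> ennreal b + ennreal c * ennreal y"
  shows "a + c * x \<le> b + c * y"
proof -
  have "ennreal (a + c * x) \<le> ennreal (b + c * y)"
  proof -
    have e1: "ennreal c * ennreal x = ennreal (c * x)" using assms by (simp add: ennreal_mult)
    have e2: "ennreal c * ennreal y = ennreal (c * y)" using assms by (simp add: ennreal_mult)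
    have e3: "ennreal a + ennreal (c * x) = ennreal (a + c * x)" using assms by (simp add: ennreal_plus)
    have e4: "ennreal b + ennreal (c * y) = ennreal (b + c * y)" using assms by (simp add: ennreal_plus)
    show ?thesis using assms(6) unfolding e1 e2 e3 e4 .
  qed
  thus ?thesis using assms by (subst (asm) ennreal_le_iff) auto
qed

lemma ir_real:
  assumes "0 \<le> c" "0 \<le> x" "0 \<le> P" "ennreal c * ennreal x \<le> ennreal P"
  shows "c * x \<le> P"
proof -
  have "ennreal c * ennreal x = ennreal (c * x)" using assms by (simp add: ennreal_mult)
  hence "ennreal (c * x) \<le> ennreal P" using assms(4) by simp
  thus ?thesis using assms(3) by (simp only: ennreal_le_iff)
qed

definition qq :: "nat \<Rightarrow> real" where "qq m = 1 - 1 / real m"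
definition hh :: "nat \<Rightarrow> nat \<Rightarrow> real" where "hh m l = 1 - qq m ^ l"
definition pp :: "nat \<Rightarrow> nat \<Rightarrow> real" where
  "pp m l = (if l = 0 then qq m ^ m else qq m ^ (m - l) / real m)"
definition dd :: "nat \<Rightarrow> nat \<Rightarrow> real" where "dd m l = hh m l - hh m (l - 1)"

lemma qq_bounds: "m \<ge> 1 \<Longrightarrow> 0 \<le> qq m \<and> qq m \<le> 1"
  unfolding qq_def by (auto simp: field_simps)

lemma pp_nonneg: "m \<ge> 1 \<Longrightarrow> pp m l \<ge> 0"
  using qq_bounds[of m] unfolding pp_def by auto

lemma hh_bounds: "m \<ge> 1 \<Longrightarrow> 0 \<le> hh m l \<and> hh m l \<le> 1"
  using qq_bounds[of m] unfolding hh_def by (auto simp: power_le_one)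

lemma hh0: "hh m 0 = 0" unfolding hh_def by simp

lemma pp_cum: "m \<ge> 1 \<Longrightarrow> 1 \<le> l \<Longrightarrow> l \<le> Suc m \<Longrightarrow> (\<Sum>v<l. pp m v) = qq m ^ (Suc m - l)"
proof (induction l)
  case 0 thus ?case by simp
next
  case (Suc l)
  show ?case
  proof (cases "l = 0")
    case True thus ?thesis by (simp add: pp_def)
  next
    case False
    have IH: "(\<Sum>v<l. pp m v) = qq m ^ (Suc m - l)" using Suc False by auto
    have "(\<Sum>v<Suc l. pp m v) = qq m ^ (Suc m - l) + qq m ^ (m - l) / real m"
      using IH False by (simp add: pp_def)
    also have "Suc m - l = Suc (m - l)" using Suc by auto
    also have "qq m ^ Suc (m - l) + qq m ^ (m - l) / real m = qq m ^ (m - l) * (qq m + 1 / real m)"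
      by (simp add: field_simps)
    also have "qq m + 1 / real m = 1" by (simp add: qq_def)
    finally show ?thesis by simp
  qed
qed

lemma pp_sum: "m \<ge> 1 \<Longrightarrow> (\<Sum>v\<in>{0..m}. pp m v) = 1"
  using pp_cum[of m "Suc m"] by (simp add: atLeast0AtMost lessThan_Suc_atMost)

lemma pp_cum2: "m \<ge> 1 \<Longrightarrow> 1 \<le> l \<Longrightarrow> l \<le> m \<Longrightarrow> (\<Sum>v<l. pp m v) = (real m - 1) * pp m l"
proof -
  assume a: "m \<ge> 1" "1 \<le> l" "l \<le> m"
  have "Suc m - l = Suc (m - l)" using a by auto
  hence "(\<Sum>v<l. pp m v) = qq m ^ (m - l) * qq m" using pp_cum[of m l] a by simp
  also have "\<dots> = (real m - 1) * pp m l" using a by (simp add: pp_def qq_def field_simps)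
  finally show ?thesis .
qed

lemma dd_eq: "m \<ge> 1 \<Longrightarrow> 1 \<le> l \<Longrightarrow> dd m l * (real m - 1) = qq m ^ l"
proof -
  assume a: "m \<ge> 1" "1 \<le> l"
  obtain k where l: "l = Suc k" using a by (cases l) auto
  have "dd m l = qq m ^ k * (1 - qq m)" unfolding dd_def hh_def l by (simp add: algebra_simps)
  also have "1 - qq m = 1 / real m" by (simp add: qq_def)
  finally show ?thesis using a unfolding l by (simp add: qq_def field_simps)
qed

lemma key_identity:
  assumes "m \<ge> 1"
  shows "(\<Sum>v\<in>{0..m}. pp m v * (hh m v * Y v + (\<Sum>l\<in>{1..m}. if v < l then dd m l * Y l else 0)))
       = (\<Sum>v\<in>{1..m}. pp m v * Y v)"
proof -
  have A: "(\<Sum>v\<in>{0..m}. pp m v * (\<Sum>l\<in>{1..m}. if v < l then dd m l * Y l else 0))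
        = (\<Sum>l\<in>{1..m}. dd m l * Y l * (\<Sum>v<l. pp m v))"
  proof -
    have "(\<Sum>v\<in>{0..m}. pp m v * (\<Sum>l\<in>{1..m}. if v < l then dd m l * Y l else 0))
        = (\<Sum>v\<in>{0..m}. \<Sum>l\<in>{1..m}. if v < l then dd m l * Y l * pp m v else 0)"
      by (simp add: sum_distrib_left mult_ac if_distrib cong: if_cong)
    also have "\<dots> = (\<Sum>l\<in>{1..m}. \<Sum>v\<in>{0..m}. if v < l then dd m l * Y l * pp m v else 0)"
      by (rule sum.swap)
    also have "\<dots> = (\<Sum>l\<in>{1..m}. dd m l * Y l * (\<Sum>v<l. pp m v))"
    proof (intro sum.cong refl)
      fix l assume l: "l \<in> {1..m}"
      have "(\<Sum>v\<in>{0..m}. if v < l then dd m l * Y l * pp m v else 0) = (\<Sum>v\<in>{0..m} \<inter> {v. v < l}. dd m l * Y l * pp m v)"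
        by (simp add: sum.inter_restrict)
      also have "{0..m} \<inter> {v. v < l} = {..<l}" using l by auto
      finally show "(\<Sum>v\<in>{0..m}. if v < l then dd m l * Y l * pp m v else 0) = dd m l * Y l * (\<Sum>v<l. pp m v)"
        by (simp add: sum_distrib_left)
    qed
    finally show ?thesis .
  qed
  have B: "(\<Sum>v\<in>{0..m}. pp m v * hh m v * Y v) = (\<Sum>v\<in>{1..m}. pp m v * hh m v * Y v)"
  proof -
    have "{0..m} = insert 0 {1..m}" by auto
    thus ?thesis by (simp add: hh0)
  qed
  have "(\<Sum>v\<in>{0..m}. pp m v * (hh m v * Y v + (\<Sum>l\<in>{1..m}. if v < l then dd m l * Y l else 0)))
      = (\<Sum>v\<in>{0..m}. pp m v * hh m v * Y v) + (\<Sum>v\<in>{0..m}. pp m v * (\<Sum>l\<in>{1..m}. if v < l then dd m l * Y l else 0))"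
    by (simp add: distrib_left sum.distrib mult_ac)
  also have "\<dots> = (\<Sum>v\<in>{1..m}. pp m v * hh m v * Y v + dd m v * Y v * (\<Sum>u<v. pp m u))"
    unfolding A B by (simp add: sum.distrib)
  also have "\<dots> = (\<Sum>v\<in>{1..m}. pp m v * Y v)"
  proof (intro sum.cong refl)
    fix v assume v: "v \<in> {1..m}"
    have "dd m v * Y v * (\<Sum>u<v. pp m u) = pp m v * Y v * (dd m v * (real m - 1))"
      using pp_cum2[of m v] v assms by simp
    also have "\<dots> = pp m v * Y v * qq m ^ v" using dd_eq[of m v] v assms by simp
    finally show "pp m v * hh m v * Y v + dd m v * Y v * (\<Sum>u<v. pp m u) = pp m v * Y v"
      by (simp add: hh_def algebra_simps)
  qed
  finally show ?thesis .
qed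

lemma mean_eq: "m \<ge> 1 \<Longrightarrow> (\<Sum>v\<in>{0..m}. pp m v * hh m v) = 1 - 2 * qq m ^ m"
proof -
  assume m: "m \<ge> 1"
  have "(\<Sum>v\<in>{0..m}. pp m v * hh m v) = (\<Sum>v\<in>{0..m}. pp m v) - (\<Sum>v\<in>{0..m}. pp m v * qq m ^ v)"
    by (simp add: hh_def algebra_simps sum_subtractf)
  also have "(\<Sum>v\<in>{0..m}. pp m v * qq m ^ v) = qq m ^ m + (\<Sum>v\<in>{1..m}. qq m ^ m / real m)"
  proof -
    have "{0..m} = insert 0 {1..m}" by auto
    hence "(\<Sum>v\<in>{0..m}. pp m v * qq m ^ v) = pp m 0 + (\<Sum>v\<in>{1..m}. pp m v * qq m ^ v)" by simp
    also have "(\<Sum>v\<in>{1..m}. pp m v * qq m ^ v) = (\<Sum>v\<in>{1..m}. qq m ^ m / real m)"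
    proof (intro sum.cong refl)
      fix v assume "v \<in> {1..m}"
      hence "m - v + v = m" by auto
      hence "qq m ^ (m - v) * qq m ^ v = qq m ^ m" by (metis power_add)
      thus "pp m v * qq m ^ v = qq m ^ m / real m" using \<open>v \<in> {1..m}\<close> by (simp add: pp_def)
    qed
    finally show ?thesis by (simp add: pp_def)
  qed
  also have "(\<Sum>v\<in>{1..m}. qq m ^ m / real m) = qq m ^ m" using m by simp
  finally show ?thesis using pp_sum[OF m] by simp
qed

lemma chain:
  assumes IR: "hh m m * Xv m \<le> Pv m"
    and T: "\<And>j. j < m \<Longrightarrow> Pv (Suc j) + hh m j * Xv j \<le> Pv j + hh m j * Xv (Suc j)"
    and j: "j \<le> m"
  shows "hh m j * Xv j + (\<Sum>l\<in>{1..m}. if j < l then dd m l * Xv l else 0) \<le> Pv j"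
  using j
proof (induction j rule: inc_induct)
  case base
  have "(\<Sum>l\<in>{1..m}. if m < l then dd m l * Xv l else 0) = 0" by (intro sum.neutral) auto
  thus ?case using IR by simp
next
  case (step n)
  have split: "(\<Sum>l\<in>{1..m}. if n < l then dd m l * Xv l else 0)
      = (\<Sum>l\<in>{1..m}. if Suc n < l then dd m l * Xv l else 0) + dd m (Suc n) * Xv (Suc n)"
  proof -
    have "(\<Sum>l\<in>{1..m}. if n < l then dd m l * Xv l else 0)
       = (\<Sum>l\<in>{1..m}. (if Suc n < l then dd m l * Xv l else 0) + (if l = Suc n then dd m l * Xv l else 0))"
      by (intro sum.cong) auto
    also have "\<dots> = (\<Sum>l\<in>{1..m}. if Suc n < l then dd m l * Xv l else 0) + dd m (Suc n) * Xv (Suc n)"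
      using step by (simp add: sum.distrib)
    finally show ?thesis .
  qed
  have e: "dd m (Suc n) * Xv (Suc n) = hh m (Suc n) * Xv (Suc n) - hh m n * Xv (Suc n)"
    by (simp add: dd_def algebra_simps)
  show ?case using split step.IH T[of n] step.hyps e by linarith
qed

lemma variance:
  assumes S: "finite S" and L: "finite L" and p1: "sum p L = 1" and p0: "\<And>v. p v \<ge> 0"
    and mu: "\<mu> = (\<Sum>v\<in>L. p v * f v)" and fb: "\<And>v. v \<in> L \<Longrightarrow> \<bar>f v - \<mu>\<bar> \<le> 1"
  shows "(\<Sum>g\<in>PiE S (\<lambda>_. L). wt p S g * (\<Sum>i\<in>S. f (g i) - \<mu>)\<^sup>2) \<le> real (card S)"
proof -
  let ?G = "PiE S (\<lambda>_. L)"
  let ?Z = "\<lambda>g i. f (g i) - \<mu>"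
  have cross: "(\<Sum>g\<in>?G. wt p S g * (?Z g i * ?Z g k)) = 0" if "i \<in> S" "k \<in> S" "i \<noteq> k" for i k
  proof -
    have "(\<Sum>g\<in>?G. wt p S g * (?Z g i * ?Z g k)) =
       (\<Sum>v\<in>L. p v * (\<Sum>g'\<in>PiE (S-{i}) (\<lambda>_. L). wt p (S-{i}) g' * (?Z (g'(i:=v)) i * ?Z (g'(i:=v)) k)))"
      by (rule decomp[OF S \<open>i \<in> S\<close>])
    also have "\<dots> = (\<Sum>v\<in>L. p v * ((f v - \<mu>) * (\<Sum>g'\<in>PiE (S-{i}) (\<lambda>_. L). wt p (S-{i}) g' * ?Z g' k)))"
    proof (intro sum.cong refl arg_cong2[where f="(*)"])
      fix v
      show "(\<Sum>g'\<in>PiE (S-{i}) (\<lambda>_. L). wt p (S-{i}) g' * (?Z (g'(i:=v)) i * ?Z (g'(i:=v)) k))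
          = (f v - \<mu>) * (\<Sum>g'\<in>PiE (S-{i}) (\<lambda>_. L). wt p (S-{i}) g' * ?Z g' k)"
        unfolding sum_distrib_left by (intro sum.cong refl) (use that in auto)
    qed
    also have "\<dots> = (\<Sum>v\<in>L. p v * (f v - \<mu>)) * (\<Sum>g'\<in>PiE (S-{i}) (\<lambda>_. L). wt p (S-{i}) g' * ?Z g' k)"
      by (simp add: sum_distrib_right mult_ac)
    also have "(\<Sum>v\<in>L. p v * (f v - \<mu>)) = (\<Sum>v\<in>L. p v * f v) - \<mu> * sum p L"
      by (simp add: algebra_simps sum_subtractf sum_distrib_left)
    also have "\<dots> = 0" using mu p1 by simp
    finally show ?thesis by simp
  qed
  have diag: "(\<Sum>g\<in>?G. wt p S g * (?Z g i * ?Z g i)) \<le> 1" if "i \<in> S" for i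
  proof -
    have "(\<Sum>g\<in>?G. wt p S g * (?Z g i * ?Z g i)) \<le> (\<Sum>g\<in>?G. wt p S g * 1)"
    proof (intro sum_mono mult_left_mono)
      fix g assume "g \<in> ?G"
      hence "g i \<in> L" using that by auto
      hence "\<bar>?Z g i\<bar> \<le> 1" using fb by auto
      hence "\<bar>?Z g i\<bar> * \<bar>?Z g i\<bar> \<le> 1 * 1" by (intro mult_mono) auto
      thus "?Z g i * ?Z g i \<le> 1" by (simp add: abs_mult[symmetric])
      show "0 \<le> wt p S g" using wt_nonneg p0 by blast
    qed
    also have "\<dots> = 1" using wt_total[OF S L p1] by simp
    finally show ?thesis .
  qed
  have "(\<Sum>g\<in>?G. wt p S g * (\<Sum>i\<in>S. ?Z g i)\<^sup>2) = (\<Sum>g\<in>?G. \<Sum>i\<in>S. \<Sum>k\<in>S. wt p S g * (?Z g i * ?Z g k))"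
  proof (intro sum.cong refl)
    fix g
    have "(\<Sum>i\<in>S. ?Z g i)\<^sup>2 = (\<Sum>i\<in>S. \<Sum>k\<in>S. ?Z g i * ?Z g k)"
      unfolding power2_eq_square by (rule sum_product)
    thus "wt p S g * (\<Sum>i\<in>S. ?Z g i)\<^sup>2 = (\<Sum>i\<in>S. \<Sum>k\<in>S. wt p S g * (?Z g i * ?Z g k))"
      by (simp add: sum_distrib_left)
  qed
  also have "\<dots> = (\<Sum>i\<in>S. \<Sum>k\<in>S. \<Sum>g\<in>?G. wt p S g * (?Z g i * ?Z g k))"
    apply (rule trans[OF sum.swap])
    apply (rule sum.cong[OF refl])
    apply (rule sum.swap)
    done
  also have "\<dots> = (\<Sum>i\<in>S. \<Sum>g\<in>?G. wt p S g * (?Z g i * ?Z g i))"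
  proof (intro sum.cong refl)
    fix i assume i: "i \<in> S"
    have "(\<Sum>k\<in>S. \<Sum>g\<in>?G. wt p S g * (?Z g i * ?Z g k)) = (\<Sum>k\<in>S. if k = i then (\<Sum>g\<in>?G. wt p S g * (?Z g i * ?Z g i)) else 0)"
      by (intro sum.cong) (use cross i in auto)
    thus "(\<Sum>k\<in>S. \<Sum>g\<in>?G. wt p S g * (?Z g i * ?Z g k)) = (\<Sum>g\<in>?G. wt p S g * (?Z g i * ?Z g i))"
      using i S by simp
  qed
  also have "\<dots> \<le> (\<Sum>i\<in>S. 1)" by (intro sum_mono diag)
  finally show ?thesis by simp
qed

theorem theorem2:
  shows "\<not> (\<exists>(M::mechanism) (\<alpha>::real) (\<theta>\<^sub>0::real).
            well_formed M \<and> individually_rational M \<and> truthful_in_expectation M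
          \<and> budget_feasible_in_expectation M
          \<and> \<alpha> > 1 - 1 / exp 1 \<and> \<theta>\<^sub>0 > 0
          \<and> (\<forall>B S u c. valid_instance B S u c \<longrightarrow> S \<noteq> {} \<longrightarrow> c_max S c / B \<le> \<theta>\<^sub>0 \<longrightarrow>
                exp_utility (M B S u c) u \<ge> ennreal (\<alpha> * opt_utility B S u c)))"
proof
  assume "\<exists>(M::mechanism) (\<alpha>::real) (\<theta>\<^sub>0::real).
            well_formed M \<and> individually_rational M \<and> truthful_in_expectation M
          \<and> budget_feasible_in_expectation M
          \<and> \<alpha> > 1 - 1 / exp 1 \<and> \<theta>\<^sub>0 > 0
          \<and> (\<forall>B S u c. valid_instance B S u c \<longrightarrow> S \<noteq> {} \<longrightarrow> c_max S c / B \<le> \<theta>\<^sub>0 \<longrightarrow>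
                exp_utility (M B S u c) u \<ge> ennreal (\<alpha> * opt_utility B S u c))"
  then obtain M :: mechanism and \<alpha> \<theta>0 :: real where wf: "well_formed M" and ir: "individually_rational M"
    and tr: "truthful_in_expectation M" and bf: "budget_feasible_in_expectation M"
    and alpha: "\<alpha> > 1 - 1 / exp 1" and th: "\<theta>0 > 0"
    and guar: "\<And>B S u c. valid_instance B S u c \<Longrightarrow> S \<noteq> {} \<Longrightarrow> c_max S c / B \<le> \<theta>0 \<Longrightarrow>
                exp_utility (M B S u c) u \<ge> ennreal (\<alpha> * opt_utility B S u c)"
    by blast
  have lim: "(\<lambda>m. (1 + (-1) / real m) ^ m) \<longlonglongrightarrow> exp (-1)" by (rule tendsto_exp_limit_sequentially)
  have "1 - \<alpha> < exp (-1)" using alpha by (simp add: exp_minus field_simps)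
  hence ev1: "eventually (\<lambda>m. 1 - \<alpha> < (1 + (-1)/real m)^m) sequentially"
    using lim order_tendstoD(1) by blast
  obtain m where m2: "m \<ge> 2" and am: "1 - \<alpha> < (1 + (-1)/real m)^m"
    using eventually_conj[OF ev1 eventually_ge_at_top[of 2]] unfolding eventually_sequentially by auto
  have m1: "m \<ge> 1" using m2 by simp
  define a where "a = qq m ^ m"
  have a_eq: "a = (1 + (-1)/real m)^m" unfolding a_def qq_def by simp
  define \<epsilon> where "\<epsilon> = \<alpha> - (1 - a)"
  have eps: "\<epsilon> > 0" using am a_eq \<epsilon>_def by simp
  define \<delta> where "\<delta> = \<epsilon> / 2"
  have dpos: "\<delta> > 0" using eps \<delta>_def by simp
  have "exp (1::real) > 1" by simp
  hence "1 / exp (1::real) < 1" by simp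
  hence apos: "\<alpha> > 0" using alpha by linarith
  obtain N :: nat where N: "\<alpha> / \<delta>^3 + 1 / (\<theta>0 * \<delta>) < real N" using reals_Archimedean2 by blast
  define n where "n = Suc N"
  have n1: "n \<ge> 1" unfolding n_def by simp
  have pos1: "\<alpha> / \<delta>^3 > 0" "1 / (\<theta>0 * \<delta>) > 0" using apos dpos th by auto
  have nbig: "real n > \<alpha> / \<delta>^3" and nth: "real n \<ge> 1 / (\<theta>0 * \<delta>)"
  proof -
    have "\<alpha> / \<delta>^3 < real N" "1 / (\<theta>0 * \<delta>) < real N" using N pos1 by linarith+
    thus "real n > \<alpha> / \<delta>^3" "real n \<ge> 1 / (\<theta>0 * \<delta>)" unfolding n_def by auto
  qed
  define S where "S = {0..<n}"
  define L where "L = {0..m}"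
  define G where "G = PiE S (\<lambda>_. L)"
  define \<mu> where "\<mu> = (\<Sum>v\<in>L. pp m v * hh m v)"
  define B where "B = real n * (\<mu> + \<delta>)"
  define u where "u = (\<lambda>_::nat. 1::real)"
  define cost where "cost = (\<lambda>(g::nat\<Rightarrow>nat) i. if i \<in> S then hh m (g i) else 0)"
  define Xc where "Xc = (\<lambda>c i. xr (M B S u c) i)"
  define Pc where "Pc = (\<lambda>c i. pr (M B S u c) i)"
  define w where "w = wt (pp m) S"
  have finS: "finite S" "S \<noteq> {}" "card S = n" using n1 unfolding S_def by auto
  have finL: "finite L" unfolding L_def by simp
  have mu_eq: "\<mu> = 1 - 2*a" using mean_eq[OF m1] by (simp add: \<mu>_def L_def a_def)
  have mu_nn: "\<mu> \<ge> 0" unfolding \<mu>_def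
    using pp_nonneg[OF m1] hh_bounds[OF m1] by (intro sum_nonneg) auto
  have "\<mu> \<le> (\<Sum>v\<in>L. pp m v)" unfolding \<mu>_def
    using pp_nonneg[OF m1] hh_bounds[OF m1] by (intro sum_mono) (simp add: mult_left_le)
  hence mu_le1: "\<mu> \<le> 1" using pp_sum[OF m1] by (simp add: L_def)
  have Bpos: "B > 0" unfolding B_def using n1 mu_nn dpos by simp
  have Bge: "B \<ge> real n * \<delta>" unfolding B_def using n1 mu_nn by simp
  have "real n * \<delta> \<ge> 1 / \<theta>0"
    using nth dpos th by (simp add: field_simps)
  hence "1 \<le> \<theta>0 * (real n * \<delta>)" using th by (simp add: field_simps)
  also have "\<theta>0 * (real n * \<delta>) \<le> \<theta>0 * B" using Bge th by (intro mult_left_mono) auto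
  finally have Bth: "1 / B \<le> \<theta>0" using Bpos th by (simp add: field_simps)
  have valid: "valid_instance B S u c" if "\<And>i. i \<in> S \<Longrightarrow> c i \<ge> 0" for c
    unfolding valid_instance_def u_def using Bpos finS that by auto
  have validg: "valid_instance B S u (cost g)" for g
    by (rule valid) (use hh_bounds[OF m1] in \<open>auto simp: cost_def\<close>)
  have cm: "c_max S (cost g) / B \<le> \<theta>0" for g
  proof -
    have "c_max S (cost g) \<le> 1" unfolding c_max_def using finS hh_bounds[OF m1]
      by (subst Max_le_iff) (auto simp: cost_def)
    hence "c_max S (cost g) / B \<le> 1 / B" using Bpos by (simp add: divide_right_mono)
    thus ?thesis using Bth by linarith
  qed
  have wfD: "fst \<omega> \<subseteq> S" "snd \<omega> i \<ge> 0" if "valid_instance B S u c" "\<omega> \<in> set_pmf (M B S u c)" for c \<omega> i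
    using wf that unfolding well_formed_def by blast+
  have budD: "exp_total_pay (M B S u c) S \<le> ennreal B" if "valid_instance B S u c" for c
    using bf that unfolding budget_feasible_in_expectation_def by blast
  have Pfin: "exp_pay (M B S u c) i = ennreal (Pc c i)" "Pc c i \<ge> 0"
    if "valid_instance B S u c" "i \<in> S" for c i
    using pay_finite[OF finS(1) wfD(2)[OF that(1)] budD[OF that(1)] that(2)] unfolding Pc_def by auto
  have Xb: "0 \<le> Xc c i" "Xc c i \<le> 1" for c i unfolding Xc_def using xr_bounds by auto
  have bud: "(\<Sum>i\<in>S. Pc c i) \<le> B" if "valid_instance B S u c" for c
    unfolding Pc_def using pay_sum_le[OF finS(1) wfD(2)[OF that] budD[OF that]] Bpos by simp
  have util: "\<alpha> * opt_utility B S u (cost g) \<le> (\<Sum>i\<in>S. Xc (cost g) i)" for g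
  proof -
    have "ennreal (\<alpha> * opt_utility B S u (cost g)) \<le> exp_utility (M B S u (cost g)) u"
      by (rule guar[OF validg finS(2) cm])
    also have "\<dots> = exp_utility (M B S u (cost g)) (\<lambda>_. 1)" by (simp only: u_def)
    also have "\<dots> = ennreal (\<Sum>i\<in>S. Xc (cost g) i)"
      unfolding Xc_def by (rule utility_eq[OF finS(1)]) (rule wfD(1)[OF validg])
    finally show ?thesis using Xb by (subst (asm) ennreal_le_iff) (auto intro: sum_nonneg)
  qed
  have IRr: "c i * Xc c i \<le> Pc c i" if "valid_instance B S u c" "i \<in> S" for c i
  proof (rule ir_real)
    show "0 \<le> c i" using that unfolding valid_instance_def by auto
    show "0 \<le> Xc c i" "0 \<le> Pc c i" using Xb Pfin that by auto
    show "ennreal (c i) * ennreal (Xc c i) \<le> ennreal (Pc c i)"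
    proof -
      have "ennreal (c i) * win_prob (M B S u c) i \<le> exp_pay (M B S u c) i"
        using ir that unfolding individually_rational_def by blast
      thus ?thesis unfolding Pfin(1)[OF that] win_prob_eq Xc_def .
    qed
  qed
  have TRr: "Pc (c(i:=cb)) i + c i * Xc c i \<le> Pc c i + c i * Xc (c(i:=cb)) i"
    if v: "valid_instance B S u c" and i: "i \<in> S" and cb: "cb \<ge> 0" for c i cb
  proof -
    have v2: "valid_instance B S u (c(i:=cb))" using v cb unfolding valid_instance_def by auto
    show ?thesis
    proof (rule truth_real)
      show "0 \<le> c i" using that unfolding valid_instance_def by auto
      show "0 \<le> Pc (c(i:=cb)) i" "0 \<le> Pc c i" "0 \<le> Xc c i" "0 \<le> Xc (c(i:=cb)) i"
        using Xb Pfin[OF v i] Pfin[OF v2 i] by auto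
      show "ennreal (Pc (c(i:=cb)) i) + ennreal (c i) * ennreal (Xc c i)
          \<le> ennreal (Pc c i) + ennreal (c i) * ennreal (Xc (c(i:=cb)) i)"
      proof -
        have "exp_pay (M B S u (c(i := cb))) i + ennreal (c i) * win_prob (M B S u c) i
          \<le> exp_pay (M B S u c) i + ennreal (c i) * win_prob (M B S u (c(i := cb))) i"
          using tr v i cb unfolding truthful_in_expectation_def by blast
        thus ?thesis unfolding Pfin(1)[OF v i] Pfin(1)[OF v2 i] win_prob_eq Xc_def .
      qed
    qed
  qed
  have psi: "hh m (g i) * Xc (cost g) i + (\<Sum>l\<in>{1..m}. if g i < l then dd m l * Xc (cost (g(i:=l))) i else 0)
      \<le> Pc (cost g) i" if i: "i \<in> S" and gi: "g i \<le> m" for g i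
  proof -
    have cu: "cost (g(i:=l)) = (cost g)(i := hh m l)" for l
      using i unfolding cost_def by auto
    have "hh m (g i) * Xc (cost (g(i:=g i))) i + (\<Sum>l\<in>{1..m}. if g i < l then dd m l * Xc (cost (g(i:=l))) i else 0)
      \<le> Pc (cost (g(i:=g i))) i"
    proof (rule chain[where Pv="\<lambda>l. Pc (cost (g(i:=l))) i" and Xv="\<lambda>l. Xc (cost (g(i:=l))) i"])
      show "hh m m * Xc (cost (g(i:=m))) i \<le> Pc (cost (g(i:=m))) i"
        using IRr[OF validg[of "g(i:=m)"] i] i by (simp add: cost_def)
      show "g i \<le> m" by fact
      fix j assume "j < m"
      have "cost (g(i:=Suc j)) = (cost (g(i:=j)))(i := hh m (Suc j))"
        using i unfolding cost_def by auto
      moreover have "cost (g(i:=j)) i = hh m j" using i by (simp add: cost_def)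
      ultimately show "Pc (cost (g(i:=Suc j))) i + hh m j * Xc (cost (g(i:=j))) i
          \<le> Pc (cost (g(i:=j))) i + hh m j * Xc (cost (g(i:=Suc j))) i"
        using TRr[OF validg[of "g(i:=j)"] i, of "hh m (Suc j)"] hh_bounds[OF m1] by auto
    qed
    thus ?thesis by simp
  qed
  define E where "E = (\<lambda>f. \<Sum>g\<in>G. w g * f g)"
  have w_nn: "w g \<ge> 0" for g unfolding w_def using wt_nonneg pp_nonneg[OF m1] by blast
  have w_tot: "(\<Sum>g\<in>G. w g) = 1" unfolding w_def G_def
    using wt_total[OF finS(1) finL] pp_sum[OF m1] by (simp add: L_def)
  have EP: "E (\<lambda>g. Xc (cost g) i) - pp m 0 \<le> E (\<lambda>g. Pc (cost g) i)" if i: "i \<in> S" for i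
  proof -
    let ?Y = "\<lambda>g' l. Xc (cost (g'(i:=l))) i"
    let ?\<Psi> = "\<lambda>g. hh m (g i) * Xc (cost g) i + (\<Sum>l\<in>{1..m}. if g i < l then dd m l * Xc (cost (g(i:=l))) i else 0)"
    let ?G' = "PiE (S-{i}) (\<lambda>_. L)"
    let ?w' = "wt (pp m) (S-{i})"
    have "E ?\<Psi> \<le> E (\<lambda>g. Pc (cost g) i)" unfolding E_def
    proof (intro sum_mono mult_left_mono w_nn)
      fix g assume "g \<in> G"
      hence "g i \<le> m" using i unfolding G_def L_def by auto
      thus "?\<Psi> g \<le> Pc (cost g) i" using psi i by blast
    qed
    moreover have "E ?\<Psi> = (\<Sum>g'\<in>?G'. ?w' g' * (\<Sum>v\<in>L. pp m v * ?\<Psi> (g'(i:=v))))"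
      unfolding E_def w_def G_def by (rule decomp2[OF finS(1) i finL])
    moreover have "E (\<lambda>g. Xc (cost g) i) = (\<Sum>g'\<in>?G'. ?w' g' * (\<Sum>v\<in>L. pp m v * ?Y g' v))"
      unfolding E_def w_def G_def by (rule decomp2[OF finS(1) i finL])
    moreover have "(\<Sum>g'\<in>?G'. ?w' g' * (\<Sum>v\<in>L. pp m v * ?Y g' v)) - pp m 0
        \<le> (\<Sum>g'\<in>?G'. ?w' g' * (\<Sum>v\<in>L. pp m v * ?\<Psi> (g'(i:=v))))"
    proof -
      have tot': "(\<Sum>g'\<in>?G'. ?w' g') = 1"
        using wt_total[of "S-{i}" L "pp m"] finS(1) finL pp_sum[OF m1] by (simp add: L_def)
      have "(\<Sum>g'\<in>?G'. ?w' g' * (\<Sum>v\<in>L. pp m v * ?Y g' v)) - pp m 0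
          = (\<Sum>g'\<in>?G'. ?w' g' * ((\<Sum>v\<in>L. pp m v * ?Y g' v) - pp m 0))"
        using tot' by (simp add: algebra_simps sum_subtractf sum_distrib_left[symmetric])
      also have "\<dots> \<le> (\<Sum>g'\<in>?G'. ?w' g' * (\<Sum>v\<in>L. pp m v * ?\<Psi> (g'(i:=v))))"
      proof (intro sum_mono mult_left_mono)
        fix g' assume "g' \<in> ?G'"
        show "0 \<le> ?w' g'" using wt_nonneg pp_nonneg[OF m1] by blast
        have "(\<Sum>v\<in>L. pp m v * ?\<Psi> (g'(i:=v)))
            = (\<Sum>v\<in>{0..m}. pp m v * (hh m v * ?Y g' v + (\<Sum>l\<in>{1..m}. if v < l then dd m l * ?Y g' l else 0)))"
        proof -
          have fu: "\<And>v l. g'(i := v, i := l) = g'(i:=l)" by simp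
          have fv: "\<And>v. (g'(i := v)) i = v" by simp
          show ?thesis unfolding L_def by (simp only: fu fv)
        qed
        also have "\<dots> = (\<Sum>v\<in>{1..m}. pp m v * ?Y g' v)" by (rule key_identity[OF m1])
        finally have k: "(\<Sum>v\<in>L. pp m v * ?\<Psi> (g'(i:=v))) = (\<Sum>v\<in>{1..m}. pp m v * ?Y g' v)" .
        have "L = insert 0 {1..m}" unfolding L_def by auto
        hence "(\<Sum>v\<in>L. pp m v * ?Y g' v) = pp m 0 * ?Y g' 0 + (\<Sum>v\<in>{1..m}. pp m v * ?Y g' v)" by simp
        moreover have "pp m 0 * ?Y g' 0 \<le> pp m 0" using Xb pp_nonneg[OF m1] by (simp add: mult_left_le)
        ultimately show "(\<Sum>v\<in>L. pp m v * ?Y g' v) - pp m 0 \<le> (\<Sum>v\<in>L. pp m v * ?\<Psi> (g'(i:=v)))"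
          using k by linarith
      qed
      finally show ?thesis .
    qed
    ultimately show ?thesis by linarith
  qed
  have upper: "E (\<lambda>g. \<Sum>i\<in>S. Xc (cost g) i) \<le> B + real n * a"
  proof -
    have swapX: "E (\<lambda>g. \<Sum>i\<in>S. Xc (cost g) i) = (\<Sum>i\<in>S. E (\<lambda>g. Xc (cost g) i))"
      unfolding E_def by (simp add: sum_distrib_left sum.swap[of _ G])
    have swapP: "E (\<lambda>g. \<Sum>i\<in>S. Pc (cost g) i) = (\<Sum>i\<in>S. E (\<lambda>g. Pc (cost g) i))"
      unfolding E_def by (simp add: sum_distrib_left sum.swap[of _ G])
    have "(\<Sum>i\<in>S. E (\<lambda>g. Xc (cost g) i)) \<le> (\<Sum>i\<in>S. E (\<lambda>g. Pc (cost g) i) + pp m 0)"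
      using EP by (intro sum_mono) (simp add: algebra_simps)
    also have "\<dots> = E (\<lambda>g. \<Sum>i\<in>S. Pc (cost g) i) + real n * a"
      using swapP finS by (simp add: sum.distrib pp_def a_def)
    also have "E (\<lambda>g. \<Sum>i\<in>S. Pc (cost g) i) \<le> E (\<lambda>g. B)"
      unfolding E_def by (intro sum_mono mult_left_mono w_nn bud validg)
    also have "E (\<lambda>g. B) = B" unfolding E_def using w_tot by (simp add: sum_distrib_right[symmetric])
    finally show ?thesis using swapX by simp
  qed
  define V where "V = (\<lambda>g. (\<Sum>i\<in>S. hh m (g i) - \<mu>)\<^sup>2)"
  have optb: "real n - V g / (real n * \<delta>^2) \<le> opt_utility B S u (cost g)" for g
  proof (cases "(\<Sum>i\<in>S. cost g i) \<le> B")
    case True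
    have "real n = sum u S" using finS by (simp add: u_def)
    also have "\<dots> \<le> opt_utility B S u (cost g)" using True finS by (intro opt_ge) auto
    moreover have "V g / (real n * \<delta>^2) \<ge> 0" unfolding V_def using n1 dpos by simp
    ultimately show ?thesis by linarith
  next
    case False
    have "(\<Sum>i\<in>S. cost g i) = (\<Sum>i\<in>S. hh m (g i))" by (intro sum.cong) (auto simp: cost_def)
    hence "(\<Sum>i\<in>S. hh m (g i)) > real n * (\<mu> + \<delta>)" using False B_def by simp
    hence gt: "(\<Sum>i\<in>S. hh m (g i) - \<mu>) > real n * \<delta>"
      using finS by (simp add: sum_subtractf algebra_simps)
    have nd: "real n * \<delta> > 0" using n1 dpos by simp
    have "(real n * \<delta>)^2 < V g" unfolding V_def using gt nd
      by (intro power_strict_mono) auto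
    hence "real n * (real n * \<delta>^2) < V g" by (simp add: power2_eq_square mult_ac)
    hence "V g / (real n * \<delta>^2) > real n" using nd dpos n1 by (subst pos_less_divide_eq) auto
    moreover have "0 \<le> opt_utility B S u (cost g)"
      using opt_ge[of S "{}" "cost g" B u] finS Bpos by simp
    ultimately show ?thesis by linarith
  qed
  have EV: "E V \<le> real n" unfolding E_def V_def w_def G_def
  proof (subst finS(3)[symmetric], rule variance[OF finS(1) finL _ _ \<mu>_def])
    show "sum (pp m) L = 1" using pp_sum[OF m1] by (simp add: L_def)
    show "\<And>v. 0 \<le> pp m v" using pp_nonneg[OF m1] by blast
    fix v
    have "0 \<le> hh m v" "hh m v \<le> 1" using hh_bounds[OF m1] by auto
    thus "\<bar>hh m v - \<mu>\<bar> \<le> 1" using mu_nn mu_le1 by linarith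
  qed
  have lower: "\<alpha> * (real n - 1 / \<delta>^2) \<le> E (\<lambda>g. \<Sum>i\<in>S. Xc (cost g) i)"
  proof -
    have "E (\<lambda>g. \<alpha> * (real n - V g / (real n * \<delta>^2))) \<le> E (\<lambda>g. \<Sum>i\<in>S. Xc (cost g) i)"
      unfolding E_def
    proof (intro sum_mono mult_left_mono w_nn)
      fix g
      have "\<alpha> * (real n - V g / (real n * \<delta>^2)) \<le> \<alpha> * opt_utility B S u (cost g)"
        using optb apos by (intro mult_left_mono) auto
      thus "\<alpha> * (real n - V g / (real n * \<delta>^2)) \<le> (\<Sum>i\<in>S. Xc (cost g) i)" using util by (rule order_trans)
    qed
    moreover have "E (\<lambda>g. \<alpha> * (real n - V g / (real n * \<delta>^2))) = \<alpha> * (real n - E V / (real n * \<delta>^2))"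
    proof -
      have "E (\<lambda>g. \<alpha> * (real n - V g / (real n * \<delta>^2)))
          = \<alpha> * real n * (\<Sum>g\<in>G. w g) - \<alpha> / (real n * \<delta>^2) * (\<Sum>g\<in>G. w g * V g)"
        unfolding E_def by (simp add: algebra_simps sum_subtractf sum_distrib_left sum_divide_distrib)
      thus ?thesis using w_tot unfolding E_def by (simp add: algebra_simps)
    qed
    moreover have "E V / (real n * \<delta>^2) \<le> real n / (real n * \<delta>^2)"
      using EV n1 dpos by (intro divide_right_mono) auto
    moreover have "real n / (real n * \<delta>^2) = 1 / \<delta>^2" using n1 by simp
    ultimately show ?thesis using apos by (smt (verit) mult_left_mono)
  qed
  have "\<alpha> * (real n - 1 / \<delta>^2) \<le> real n * (1 - a + \<delta>)"
    using lower upper unfolding B_def mu_eq by (simp add: algebra_simps)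
  moreover have e: "1 - a = \<alpha> - 2 * \<delta>" using \<epsilon>_def \<delta>_def by simp
  ultimately have "\<alpha> * (real n - 1 / \<delta>^2) \<le> real n * (\<alpha> - \<delta>)" by simp
  hence "\<alpha> * real n - \<alpha> * (1 / \<delta>^2) \<le> real n * \<alpha> - real n * \<delta>" by (simp add: algebra_simps)
  hence "real n * \<delta> \<le> \<alpha> * (1 / \<delta>^2)" by (simp add: mult_ac)
  hence "real n * \<delta> * \<delta>^2 \<le> \<alpha> * (1 / \<delta>^2) * \<delta>^2" by (rule mult_right_mono) simp
  also have "\<alpha> * (1 / \<delta>^2) * \<delta>^2 = \<alpha>" using dpos by simp
  finally have "real n * \<delta> * \<delta>^2 \<le> \<alpha>" .
  moreover have "real n * \<delta>^3 > \<alpha>" using nbig dpos by (simp add: field_simps)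
  ultimately show False by (simp add: power3_eq_cube power2_eq_square mult_ac)
qed

end
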